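(* Let $A$ be a ring, $\varpi\in A$ a non-zero-divisor, and $H\in A$ an element whose image in $A/\varpi$ is a non-zero-divisor. Endow $A$ with the $\varpi$-adic topology and let $A\langle X\rangle$ be the ring of restricted power series. Then the map $$\varphi:A\langle X\rangle/(XH-\varpi)\to A\langle X\rangle/(XH-1),\qquad X\mapsto\varpi X,$$ is injective.
   Context: $A\langle X\rangle=\{\sum_{n\ge0}a_nX^n: a_n\in A,\ \text{for every }k\text{ one has }a_n\in\varpi^kA\text{ for all sufficiently large }n\}$. *)

theory Defs
  imports "HOL-Computational_Algebra.Formal_Power_Series"
begin

definition restricted :: "'a::comm_ring_1 \<Rightarrow> 'a fps \<Rightarrow> bool" where
  "restricted w f \<longleftrightarrow> (\<forall>k. \<forall>\<^sub>F n in sequentially. w ^ k dvd fps_nth f n)"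

definition in_restricted_ideal :: "'a::comm_ring_1 \<Rightarrow> 'a fps \<Rightarrow> 'a fps \<Rightarrow> bool" where
  "in_restricted_ideal w g f \<longleftrightarrow> (\<exists>q. restricted w q \<and> f = g * q)"

definition subst_scale :: "'a::comm_ring_1 \<Rightarrow> 'a fps \<Rightarrow> 'a fps" where
  "subst_scale w f = Abs_fps (\<lambda>n. w ^ n * fps_nth f n)"

end

theory Submission
  imports Defs
begin

unbundle fps_syntax

lemma coeff_lin: "fps_nth ((fps_X * fps_const (H::'a::comm_ring_1) - fps_const c) * q) n = (if n = 0 then - c * q $ 0 else H * q $ (n-1) - c * q $ n)"
proof -
  have "(fps_X * fps_const H - fps_const c) * q = fps_X * (fps_const H * q) - fps_const c * q"
    by (simp add: algebra_simps)
  then show ?thesis by simp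
qed

lemma coeff_lin1: "fps_nth ((fps_X * fps_const (H::'a::comm_ring_1) - 1) * q) n = (if n = 0 then - q $ 0 else H * q $ (n-1) - q $ n)"
  using coeff_lin[of H 1 q n] by simp

lemma pow_nzd:
  fixes w :: "'a::comm_ring_1"
  assumes "\<forall>a. w * a = 0 \<longrightarrow> a = 0"
  shows "w ^ k * a = 0 \<Longrightarrow> a = 0"
proof (induction k arbitrary: a)
  case 0 then show ?case by simp
next
  case (Suc k)
  then have "w * (w ^ k * a) = 0" by (simp add: mult.assoc)
  then have "w ^ k * a = 0" using assms by blast
  then show ?case using Suc.IH by blast
qed

lemma pow_cancel_dvd:
  fixes w :: "'a::comm_ring_1"
  assumes "\<forall>a. w * a = 0 \<longrightarrow> a = 0"
  shows "w ^ k * w dvd w ^ k * x \<Longrightarrow> w dvd x"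
proof -
  assume "w ^ k * w dvd w ^ k * x"
  then obtain t where "w ^ k * x = w ^ k * w * t" by (auto elim: dvdE)
  then have "w ^ k * (x - w * t) = 0" by (simp add: algebra_simps)
  then have "x - w * t = 0" using pow_nzd[OF assms] by blast
  then show "w dvd x" by (metis dvd_triv_left eq_iff_diff_eq_0)
qed

theorem mainTheorem17:
  fixes w H :: "'a::comm_ring_1"
  assumes w_nzd: "\<forall>a. w * a = 0 \<longrightarrow> a = 0"
    and H_nzd_mod_w: "\<forall>a. w dvd H * a \<longrightarrow> w dvd a"
  shows "\<forall>f. restricted w f \<longrightarrow>
           in_restricted_ideal w (fps_X * fps_const H - 1) (subst_scale w f) \<longrightarrow>
           in_restricted_ideal w (fps_X * fps_const H - fps_const w) f"
proof (intro allI impI)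
  fix f assume rf: "restricted w f"
    and "in_restricted_ideal w (fps_X * fps_const H - 1) (subst_scale w f)"
  then obtain q where rq: "restricted w q"
    and eq: "subst_scale w f = (fps_X * fps_const H - 1) * q"
    unfolding in_restricted_ideal_def by blast
  have rec: "w ^ n * f $ n = (if n = 0 then - q $ 0 else H * q $ (n-1) - q $ n)" for n
    using arg_cong[OF eq, of "\<lambda>p. p $ n"] unfolding subst_scale_def coeff_lin1 by simp
  have rec1: "q $ (Suc j) = H * q $ j - w ^ Suc j * f $ (Suc j)" for j
    using rec[of "Suc j"] by (simp add: algebra_simps)
  have L: "w ^ Suc m dvd q $ j" if jm: "m \<le> j" and h1: "w ^ m dvd q $ j"
    and h2: "w ^ Suc m dvd q $ (Suc j)" for m j
  proof -
    obtain r where r: "q $ j = w ^ m * r" using h1 by (auto elim: dvdE)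
    have "w ^ Suc m dvd w ^ Suc j * f $ (Suc j)"
      using jm by (intro dvd_mult2 le_imp_power_dvd) simp
    then have "w ^ Suc m dvd H * q $ j"
      using h2 rec1[of j] by (metis add_diff_cancel dvd_add diff_add_cancel)
    then have "w ^ m * w dvd w ^ m * (H * r)"
      by (simp add: r algebra_simps)
    then have "w dvd H * r" using pow_cancel_dvd[OF w_nzd] by blast
    then have "w dvd r" using H_nzd_mod_w by blast
    then show ?thesis by (simp add: r mult_dvd_mono mult.commute)
  qed
  have C: "\<forall>j. m \<le> Suc j \<longrightarrow> w ^ m dvd q $ j" for m
  proof (induction m)
    case 0 then show ?case by simp
  next
    case (Suc m)
    from rq have "\<forall>\<^sub>F n in sequentially. w ^ Suc m dvd q $ n"
      unfolding restricted_def by blast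
    then obtain N where N: "\<And>n. n \<ge> N \<Longrightarrow> w ^ Suc m dvd q $ n"
      unfolding eventually_sequentially by blast
    have D: "\<forall>j. m \<le> j \<and> N \<le> j + d \<longrightarrow> w ^ Suc m dvd q $ j" for d
    proof (induction d)
      case 0 then show ?case using N by simp
    next
      case (Suc d)
      show ?case
      proof (intro allI impI)
        fix j assume a: "m \<le> j \<and> N \<le> j + Suc d"
        show "w ^ Suc m dvd q $ j"
        proof (cases "N \<le> j")
          case True then show ?thesis using N by blast
        next
          case False
          have "w ^ Suc m dvd q $ (Suc j)" using Suc.IH a by auto
          moreover have "w ^ m dvd q $ j" using Suc.IH a \<open>\<forall>j. m \<le> Suc j \<longrightarrow> w ^ m dvd q $ j\<close> by auto
          ultimately show ?thesis using L a by blast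
        qed
      qed
    qed
    show ?case
    proof (intro allI impI)
      fix j assume "Suc m \<le> Suc j"
      then show "w ^ Suc m dvd q $ j" using D[of N] by auto
    qed
  qed
  have "\<exists>g. q $ j = w ^ Suc j * g" for j
    using C[of "Suc j"] by (auto elim: dvdE)
  then obtain g where g: "\<And>j. q $ j = w ^ Suc j * g j" by metis
  have fg: "f $ n = (if n = 0 then - w * g 0 else H * g (n-1) - w * g n)" for n
  proof (cases n)
    case 0 then show ?thesis using rec[of 0] g[of 0] by simp
  next
    case (Suc k)
    have "w ^ n * f $ n = w ^ n * (H * g k - w * g n)"
      using rec[of n] g[of k] g[of n] Suc by (simp add: algebra_simps)
    then have "w ^ n * (f $ n - (H * g k - w * g n)) = 0" by (simp add: algebra_simps)
    then have "f $ n = H * g k - w * g n" using pow_nzd[OF w_nzd] by fastforce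
    then show ?thesis using Suc by simp
  qed
  have feq: "f = (fps_X * fps_const H - fps_const w) * Abs_fps g"
    by (rule fps_ext) (simp add: coeff_lin fg)
  have rg: "\<forall>\<^sub>F n in sequentially. w ^ k dvd g n" for k
  proof (induction k)
    case 0 then show ?case by simp
  next
    case (Suc k)
    then obtain N where N: "\<And>n. n \<ge> N \<Longrightarrow> w ^ k dvd g n"
      unfolding eventually_sequentially by blast
    from rf have "\<forall>\<^sub>F n in sequentially. w ^ Suc k dvd f $ n"
      unfolding restricted_def by blast
    then obtain M where M: "\<And>n. n \<ge> M \<Longrightarrow> w ^ Suc k dvd f $ n"
      unfolding eventually_sequentially by blast
    show ?case unfolding eventually_sequentially
    proof (intro exI allI impI)
      fix n assume n: "N + M \<le> n"
      obtain h1 where h1: "g n = w ^ k * h1" using N[of n] n by (auto elim: dvdE)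
      obtain h2 where h2: "g (Suc n) = w ^ k * h2" using N[of "Suc n"] n by (auto elim: dvdE)
      have "w ^ Suc k dvd f $ (Suc n)" using M n by auto
      then have "w ^ k * w dvd w ^ k * (H * h1 - w * h2)"
        using fg[of "Suc n"] h1 h2 by (simp add: algebra_simps)
      then have "w dvd H * h1 - w * h2" using pow_cancel_dvd[OF w_nzd] by blast
      then have "w dvd H * h1" by (metis diff_add_cancel dvd_add dvd_triv_left)
      then have "w dvd h1" using H_nzd_mod_w by blast
      then show "w ^ Suc k dvd g n" by (simp add: h1 mult_dvd_mono mult.commute)
    qed
  qed
  have "restricted w (Abs_fps g)" unfolding restricted_def using rg by simp
  then show "in_restricted_ideal w (fps_X * fps_const H - fps_const w) f"
    unfolding in_restricted_ideal_def using feq by blast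
qed

end
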